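(* Let $G$ be a simple cubic graph, and let $(G',r)$ be constructed from $G$ as described in the context. Then $\kappa(G',r)=\tau(G)+|E(G)|$, where $\tau(G)$ is the minimum size of a vertex cover of $G$.
   Context: Construction of $G'$ from a cubic graph $G$: start with $G$. (1) For each edge $e=xy$ of $G$, delete $xy$, add three new vertices $w_{x,e},w_e,w_{y,e}$ and the edges $xw_{x,e}, w_{x,e}w_e, w_ew_{y,e}, w_{y,e}y$. (2) For each edge $e=xy$ of $G$, add two new vertices $z_{x,e},z_{y,e}$ and the edges $w_{x,e}z_{x,e}, z_{x,e}w_e, w_ez_{y,e}, z_{y,e}w_{y,e}$ (so $\{w_{x,e},w_e,z_{x,e}\}$ and $\{w_{y,e},w_e,z_{y,e}\}$ induce triangles). (3) For every vertex $x$ of $G$ with incident edges $e,f,g$, add the edges $w_{x,e}w_{x,f}, w_{x,e}w_{x,g}, w_{x,f}w_{x,g}$. Requirements: for every edge $e=xy$ of $G$, $r(w_{x,e})=r(w_{y,e})=4$ and $r(w_e)=3$; $r(v')=0$ for all other vertices $v'$ of $G'$. For a graph $H$, a set $S\subseteq V(H)$ and $v\in V(H)\setminus S$, a $v$--$S$ fan of order $k$ is a collection of $k$ paths, each connecting $v$ to a vertex of $S$, pairwise vertex-disjoint except at $v$; $v$ is $k$-linked to $S$ if such a fan exists. A vector connectivity set for $(H,r)$ is a set $S$ such that every $v\in V(H)\setminus S$ is $r(v)$-linked to $S$; $\kappa(H,r)$ is the minimum size of such a set. A vertex cover of $G$ is a set of vertices containing an endpoint of every edge. *)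

theory Defs
  imports Main
begin

definition simple_graph :: "'a set \<Rightarrow> 'a set set \<Rightarrow> bool" where
  "simple_graph V E \<longleftrightarrow> finite V \<and> (\<forall>e\<in>E. e \<subseteq> V \<and> card e = 2)"

definition degree :: "'a set set \<Rightarrow> 'a \<Rightarrow> nat" where
  "degree E v = card {e\<in>E. v \<in> e}"

definition cubic_graph :: "'a set \<Rightarrow> 'a set set \<Rightarrow> bool" where
  "cubic_graph V E \<longleftrightarrow> simple_graph V E \<and> (\<forall>v\<in>V. degree E v = 3)"

definition vertex_cover :: "'a set \<Rightarrow> 'a set set \<Rightarrow> 'a set \<Rightarrow> bool" where
  "vertex_cover V E C \<longleftrightarrow> C \<subseteq> V \<and> (\<forall>e\<in>E. e \<inter> C \<noteq> {})"

definition tau :: "'a set \<Rightarrow> 'a set set \<Rightarrow> nat" where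
  "tau V E = Min {card C | C. vertex_cover V E C}"

definition is_path :: "'b set \<Rightarrow> 'b set set \<Rightarrow> 'b list \<Rightarrow> bool" where
  "is_path VH EH p \<longleftrightarrow> p \<noteq> [] \<and> distinct p \<and> set p \<subseteq> VH \<and>
     (\<forall>i. Suc i < length p \<longrightarrow> {p ! i, p ! Suc i} \<in> EH)"

definition is_fan :: "'b set \<Rightarrow> 'b set set \<Rightarrow> 'b \<Rightarrow> 'b set \<Rightarrow> 'b list set \<Rightarrow> nat \<Rightarrow> bool" where
  "is_fan VH EH v S P k \<longleftrightarrow> finite P \<and> card P = k \<and>
     (\<forall>p\<in>P. is_path VH EH p \<and> hd p = v \<and> last p \<in> S) \<and>
     (\<forall>p\<in>P. \<forall>q\<in>P. p \<noteq> q \<longrightarrow> set p \<inter> set q = {v})"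

definition k_linked :: "'b set \<Rightarrow> 'b set set \<Rightarrow> 'b \<Rightarrow> 'b set \<Rightarrow> nat \<Rightarrow> bool" where
  "k_linked VH EH v S k \<longleftrightarrow> (\<exists>P. is_fan VH EH v S P k)"

definition vc_set :: "'b set \<Rightarrow> 'b set set \<Rightarrow> ('b \<Rightarrow> nat) \<Rightarrow> 'b set \<Rightarrow> bool" where
  "vc_set VH EH r S \<longleftrightarrow> S \<subseteq> VH \<and> (\<forall>v\<in>VH - S. k_linked VH EH v S (r v))"

definition kappa :: "'b set \<Rightarrow> 'b set set \<Rightarrow> ('b \<Rightarrow> nat) \<Rightarrow> nat" where
  "kappa VH EH r = Min {card S | S. vc_set VH EH r S}"

text \<open>Orig x = x; WX x e = w_{x,e}; WE e = w_e; ZX x e = z_{x,e}.\<close>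
datatype 'a gvert = Orig 'a | WX 'a "'a set" | WE "'a set" | ZX 'a "'a set"

definition G'_V :: "'a set \<Rightarrow> 'a set set \<Rightarrow> 'a gvert set" where
  "G'_V V E = Orig ` V \<union> {WX x e | x e. e \<in> E \<and> x \<in> e} \<union> WE ` E
      \<union> {ZX x e | x e. e \<in> E \<and> x \<in> e}"

definition G'_E :: "'a set \<Rightarrow> 'a set set \<Rightarrow> 'a gvert set set" where
  "G'_E V E =
      {{Orig x, WX x e} | x e. e \<in> E \<and> x \<in> e}
    \<union> {{WX x e, WE e} | x e. e \<in> E \<and> x \<in> e}
    \<union> {{WX x e, ZX x e} | x e. e \<in> E \<and> x \<in> e}
    \<union> {{ZX x e, WE e} | x e. e \<in> E \<and> x \<in> e}
    \<union> {{WX x e, WX x f} | x e f. e \<in> E \<and> f \<in> E \<and> x \<in> e \<and> x \<in> f \<and> e \<noteq> f}"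

fun G'_r :: "'a gvert \<Rightarrow> nat" where
  "G'_r (WX x e) = 4"
| "G'_r (WE e) = 3"
| "G'_r (Orig x) = 0"
| "G'_r (ZX x e) = 0"

end

theory Submission
  imports Defs
begin


fun walk :: "'b set \<Rightarrow> 'b set set \<Rightarrow> 'b list \<Rightarrow> bool" where
  "walk VH EH [] = False"
| "walk VH EH [a] = (a \<in> VH)"
| "walk VH EH (a#b#p) = (a \<in> VH \<and> {a,b} \<in> EH \<and> walk VH EH (b#p))"

lemma walk_is_path: "walk VH EH p \<Longrightarrow> distinct p \<Longrightarrow> is_path VH EH p"
proof (induction VH EH p rule: walk.induct)
  case (1 VH EH) then show ?case by simp
next
  case (2 VH EH a) then show ?case by (simp add: is_path_def)
next
  case (3 VH EH a b p)
  then have ip: "is_path VH EH (b#p)" by simp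
  show ?case unfolding is_path_def
  proof (intro conjI allI impI)
    fix i assume "Suc i < length (a#b#p)"
    then show "{(a#b#p) ! i, (a#b#p) ! Suc i} \<in> EH"
      using 3(2) ip unfolding is_path_def by (cases i) auto
  qed (use 3(2,3) ip in \<open>auto simp: is_path_def\<close>)
qed

lemma distinct_concat_nonempty:
  assumes "distinct (concat ts)" "\<forall>t\<in>set ts. t \<noteq> []"
  shows "distinct ts \<and> (\<forall>t1\<in>set ts. \<forall>t2\<in>set ts. t1 \<noteq> t2 \<longrightarrow> set t1 \<inter> set t2 = {})"
proof -
  have "[] \<notin> set ts" using assms(2) by blast
  then have "removeAll [] ts = ts" by (rule removeAll_id)
  then show ?thesis using assms(1) unfolding distinct_concat_iff by metis
qed

lemma fan_from_tails:
  assumes vS: "v \<notin> S"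
    and tails: "\<forall>t\<in>set ts. t \<noteq> [] \<and> walk VH EH (v#t) \<and> last t \<in> S"
    and dist: "distinct (v # concat ts)"
  shows "k_linked VH EH v S (length ts)"
proof -
  have dc: "distinct (concat ts)" using dist by simp
  have ne: "\<forall>t\<in>set ts. t \<noteq> []" using tails by simp
  from distinct_concat_nonempty[OF dc ne]
  have dts: "distinct ts" and disj: "\<forall>t1\<in>set ts. \<forall>t2\<in>set ts. t1 \<noteq> t2 \<longrightarrow> set t1 \<inter> set t2 = {}"
    by auto
  have vc: "v \<notin> set (concat ts)" using dist by simp
  have vnot: "\<And>t. t\<in>set ts \<Longrightarrow> v \<notin> set t" using vc by simp
  have dt: "\<And>t. t\<in>set ts \<Longrightarrow> distinct t"
    using dc by (induction ts) auto
  define P where "P = (\<lambda>t. v#t) ` set ts"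
  have cP: "card P = length ts"
    unfolding P_def by (simp add: card_image distinct_card[OF dts])
  have pth: "\<forall>p\<in>P. is_path VH EH p \<and> hd p = v \<and> last p \<in> S"
  proof
    fix p assume "p \<in> P"
    then obtain t where t: "t \<in> set ts" "p = v#t" unfolding P_def by blast
    have "distinct (v#t)" using vnot[OF t(1)] dt[OF t(1)] by simp
    moreover have "walk VH EH (v#t)" "t \<noteq> []" "last t \<in> S" using tails t(1) by auto
    ultimately have "is_path VH EH (v#t)" "last (v#t) \<in> S"
      using walk_is_path[of VH EH "v#t"] by (simp_all only: last.simps if_False)
    then show "is_path VH EH p \<and> hd p = v \<and> last p \<in> S"
      using t(2) by simp
  qed
  have dsj: "\<forall>p\<in>P. \<forall>q\<in>P. p \<noteq> q \<longrightarrow> set p \<inter> set q = {v}"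
  proof (intro ballI impI)
    fix p q assume "p \<in> P" "q \<in> P" "p \<noteq> q"
    then obtain t u where "t \<in> set ts" "p = v#t" "u \<in> set ts" "q = v#u" unfolding P_def by blast
    moreover have "set t \<inter> set u = {}" using disj calculation \<open>p \<noteq> q\<close> by blast
    ultimately show "set p \<inter> set q = {v}" by auto
  qed
  have "finite P" unfolding P_def by simp
  then have "is_fan VH EH v S P (length ts)"
    unfolding is_fan_def using cP pth dsj by blast
  then show ?thesis unfolding k_linked_def by blast
qed



lemma fan_card_bound:
  assumes fan: "is_fan VH EH v S P k"
    and g: "\<forall>p\<in>P. g p \<in> set p \<and> g p \<noteq> v \<and> g p \<in> A" and fA: "finite A"
  shows "k \<le> card A"
proof -
  have inj: "inj_on g P"
  proof (rule inj_onI)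
    fix p q assume "p \<in> P" "q \<in> P" "g p = g q"
    show "p = q"
    proof (rule ccontr)
      assume "p \<noteq> q"
      then have "set p \<inter> set q = {v}" using fan \<open>p\<in>P\<close> \<open>q\<in>P\<close> unfolding is_fan_def by blast
      moreover have "g p \<in> set p \<inter> set q" using g \<open>p\<in>P\<close> \<open>q\<in>P\<close> \<open>g p = g q\<close> by auto
      ultimately show False using g \<open>p\<in>P\<close> by auto
    qed
  qed
  have "g ` P \<subseteq> A" using g by auto
  then have "card P \<le> card A" using card_inj_on_le[OF inj _ fA] by blast
  then show ?thesis using fan unfolding is_fan_def by auto
qed


lemma path_facts:
  assumes "is_path VH EH p" "hd p = v" "last p \<in> S" "v \<notin> S"
  shows "length p \<ge> 2 \<and> p!0 = v \<and> {v, p!1} \<in> EH \<and> p!1 \<noteq> v \<and> p!1 \<in> set p"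
proof -
  have ne: "p \<noteq> []" using assms(1) unfolding is_path_def by auto
  have "length p \<noteq> 1"
  proof
    assume "length p = 1"
    then have "last p = hd p" using ne by (cases p) auto
    then show False using assms by auto
  qed
  moreover have "length p \<noteq> 0" using ne by simp
  ultimately have l2: "length p \<ge> 2" by linarith
  have h0: "p!0 = v" using ne assms(2) by (simp add: hd_conv_nth)
  have "{p!0, p!Suc 0} \<in> EH" using assms(1) l2 unfolding is_path_def by auto
  moreover have "p!1 \<noteq> p!0" using assms(1) l2 unfolding is_path_def
    by (simp add: nth_eq_iff_index_eq)
  ultimately show ?thesis using l2 h0 by auto
qed

lemma path_facts2:
  assumes "is_path VH EH p" "hd p = v" "last p \<in> S" "v \<notin> S" "p!1 \<notin> S"
  shows "length p \<ge> 3 \<and> {p!1, p!2} \<in> EH \<and> p!2 \<noteq> v \<and> p!2 \<noteq> p!1 \<and> p!2 \<in> set p"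
proof -
  have pf: "length p \<ge> 2 \<and> p!0 = v" using path_facts[OF assms(1-4)] by auto
  have "length p \<noteq> 2"
  proof
    assume "length p = 2"
    moreover have "last p = p!(length p - 1)" using pf by (intro last_conv_nth) auto
    ultimately have "last p = p!1" by simp
    then show False using assms by auto
  qed
  then have l3: "length p \<ge> 3" using pf by auto
  have "{p!1, p!Suc 1} \<in> EH" using assms(1) l3 unfolding is_path_def by auto
  moreover have "p!2 \<noteq> p!0" "p!2 \<noteq> p!1" using assms(1) l3 unfolding is_path_def
    by (simp_all add: nth_eq_iff_index_eq)
  moreover have "p!2 \<in> set p" using l3 by (intro nth_mem) simp
  ultimately show ?thesis using l3 pf by (simp add: numeral_2_eq_2)
qed


lemma N_WE: "{WE e, b} \<in> G'_E V E \<Longrightarrow> \<exists>x\<in>e. b = WX x e \<or> b = ZX x e"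
  unfolding G'_E_def by (auto simp: doubleton_eq_iff)

lemma N_ZX: "{ZX x e, b} \<in> G'_E V E \<Longrightarrow> b = WX x e \<or> b = WE e"
  unfolding G'_E_def by (auto simp: doubleton_eq_iff)

lemma N_Orig: "{Orig x, b} \<in> G'_E V E \<Longrightarrow> \<exists>f\<in>E. x \<in> f \<and> b = WX x f"
  unfolding G'_E_def by (auto simp: doubleton_eq_iff)

lemma N_WX: "{WX x e, b} \<in> G'_E V E \<Longrightarrow>
   b = Orig x \<or> b = WE e \<or> b = ZX x e \<or> (\<exists>f\<in>E. x \<in> f \<and> f \<noteq> e \<and> b = WX x f)"
  unfolding G'_E_def by (auto simp: doubleton_eq_iff)



lemma L1:
  assumes vc: "vc_set (G'_V V E) (G'_E V E) G'_r S" and eE: "e \<in> E" and ce: "card e = 2"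
  shows "WE e \<in> S \<or> (\<exists>x\<in>e. ZX x e \<in> S)"
proof (rule ccontr)
  assume "\<not> ?thesis"
  then have nW: "WE e \<notin> S" and nZ: "\<forall>x\<in>e. ZX x e \<notin> S" by auto
  have "WE e \<in> G'_V V E" using eE by (simp add: G'_V_def)
  then have "k_linked (G'_V V E) (G'_E V E) (WE e) S (G'_r (WE e))" using vc nW unfolding vc_set_def by blast
  then have "k_linked (G'_V V E) (G'_E V E) (WE e) S 3" by simp
  then obtain P where fan: "is_fan (G'_V V E) (G'_E V E) (WE e) S P 3" unfolding k_linked_def by blast
  define g where "g p = (if p!1 \<in> (\<lambda>x. ZX x e) ` e then p!2 else p!1)" for p :: "'a gvert list"
  have "\<forall>p\<in>P. g p \<in> set p \<and> g p \<noteq> WE e \<and> g p \<in> (\<lambda>x. WX x e) ` e"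
  proof
    fix p assume pP: "p \<in> P"
    have ip: "is_path (G'_V V E) (G'_E V E) p" "hd p = WE e" "last p \<in> S"
      using fan pP unfolding is_fan_def by auto
    note pf = path_facts[OF ip nW]
    then have "{WE e, p!1} \<in> G'_E V E" by blast
    from N_WE[OF this] obtain x where x: "x \<in> e" "p!1 = WX x e \<or> p!1 = ZX x e" by blast
    show "g p \<in> set p \<and> g p \<noteq> WE e \<and> g p \<in> (\<lambda>x. WX x e) ` e"
    proof (cases "p!1 = ZX x e")
      case True
      then have "p!1 \<notin> S" using nZ x by auto
      note pf2 = path_facts2[OF ip nW this]
      then have "{ZX x e, p!2} \<in> G'_E V E" using True by simp
      from N_ZX[OF this] pf2 have "p!2 = WX x e" by auto
      moreover have "g p = p!2" using True x unfolding g_def by auto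
      ultimately show ?thesis using pf2 x by auto
    next
      case False
      then have "p!1 = WX x e" using x by auto
      moreover then have "g p = p!1" unfolding g_def by auto
      ultimately show ?thesis using pf x by auto
    qed
  qed
  moreover have "finite e" using ce by (metis card.infinite zero_neq_numeral)
  ultimately have "3 \<le> card ((\<lambda>x. WX x e) ` e)" using fan_card_bound[OF fan] by blast
  moreover have "card ((\<lambda>x. WX x e) ` e) \<le> card e" by (rule card_image_le) fact
  ultimately show False using ce by simp
qed

lemma L2:
  assumes vc: "vc_set (G'_V V E) (G'_E V E) G'_r S" and cub: "cubic_graph V E"
    and eE: "e \<in> E" and xe: "x \<in> e" and nO: "Orig x \<notin> S" and nZ: "ZX x e \<notin> S"
  shows "WX x e \<in> S"
proof (rule ccontr)
  assume nW: "WX x e \<notin> S"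
  have "x \<in> V" using cub eE xe unfolding cubic_graph_def simple_graph_def by auto
  then have d3: "card {f\<in>E. x \<in> f} = 3" using cub unfolding cubic_graph_def degree_def by auto
  then have fin: "finite {f\<in>E. x \<in> f}" by (metis card.infinite zero_neq_numeral)
  have c2: "card ({f\<in>E. x \<in> f} - {e}) = 2" using d3 fin eE xe by simp
  define A where "A = insert (WE e) ((\<lambda>f. WX x f) ` ({f\<in>E. x \<in> f} - {e}))"
  have finA: "finite A" unfolding A_def using fin by simp
  have "card ((\<lambda>f. WX x f) ` ({f\<in>E. x \<in> f} - {e})) \<le> 2"
    using card_image_le[of "{f\<in>E. x \<in> f} - {e}" "\<lambda>f. WX x f"] fin c2 by simp
  then have cA: "card A \<le> 3" unfolding A_def using fin
    by (simp add: card_insert_if)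
  have "WX x e \<in> G'_V V E" using eE xe by (auto simp: G'_V_def)
  then have "k_linked (G'_V V E) (G'_E V E) (WX x e) S (G'_r (WX x e))" using vc nW unfolding vc_set_def by blast
  then have "k_linked (G'_V V E) (G'_E V E) (WX x e) S 4" by simp
  then obtain P where fan: "is_fan (G'_V V E) (G'_E V E) (WX x e) S P 4" unfolding k_linked_def by blast
  define g where "g p = (if p!1 = Orig x \<or> p!1 = ZX x e then p!2 else p!1)" for p :: "'a gvert list"
  have "\<forall>p\<in>P. g p \<in> set p \<and> g p \<noteq> WX x e \<and> g p \<in> A"
  proof
    fix p assume pP: "p \<in> P"
    have ip: "is_path (G'_V V E) (G'_E V E) p" "hd p = WX x e" "last p \<in> S"
      using fan pP unfolding is_fan_def by auto
    note pf = path_facts[OF ip nW]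
    then have "{WX x e, p!1} \<in> G'_E V E" by blast
    from N_WX[OF this]
    consider "p!1 = Orig x" | "p!1 = WE e" | "p!1 = ZX x e" | f where "f \<in> E" "x \<in> f" "f \<noteq> e" "p!1 = WX x f"
      by blast
    then show "g p \<in> set p \<and> g p \<noteq> WX x e \<and> g p \<in> A"
    proof cases
      case 1
      then have "p!1 \<notin> S" using nO by simp
      note pf2 = path_facts2[OF ip nW this]
      then have "{Orig x, p!2} \<in> G'_E V E" using 1 by simp
      from N_Orig[OF this] obtain f where f: "f \<in> E" "x \<in> f" "p!2 = WX x f" by blast
      with pf2 have "f \<noteq> e" by auto
      then have "p!2 \<in> A" unfolding A_def using f by auto
      moreover have "g p = p!2" using 1 unfolding g_def by simp
      ultimately show ?thesis using pf2 by simp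
    next
      case 2
      then have "g p = p!1" unfolding g_def by simp
      then show ?thesis using pf 2 unfolding A_def by simp
    next
      case 3
      then have "p!1 \<notin> S" using nZ by simp
      note pf2 = path_facts2[OF ip nW this]
      then have "{ZX x e, p!2} \<in> G'_E V E" using 3 by simp
      from N_ZX[OF this] pf2 have "p!2 = WE e" by auto
      moreover have "g p = p!2" using 3 unfolding g_def by simp
      ultimately show ?thesis using pf2 unfolding A_def by simp
    next
      case 4
      then have "g p = p!1" unfolding g_def by simp
      moreover have "p!1 \<in> A" unfolding A_def using 4 by auto
      ultimately show ?thesis using pf by simp
    qed
  qed
  then have "4 \<le> card A" using fan_card_bound[OF fan _ finA] by blast
  then show False using cA by simp
qed



lemma finite_E: "simple_graph V E \<Longrightarrow> finite E"
  unfolding simple_graph_def by (meson Pow_iff finite_Pow_iff rev_finite_subset subsetI)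

lemma finite_G'V:
  assumes sg: "simple_graph V E"
  shows "finite (G'_V V E)"
proof -
  have fV: "finite V" and fE: "finite E" using sg finite_E unfolding simple_graph_def by auto
  have sub: "\<And>e x. e \<in> E \<Longrightarrow> x \<in> e \<Longrightarrow> x \<in> V" using sg unfolding simple_graph_def by auto
  have "{WX x e | x e. e \<in> E \<and> x \<in> e} \<subseteq> (\<lambda>(x,e). WX x e) ` (V \<times> E)" using sub by auto
  moreover have "{ZX x e | x e. e \<in> E \<and> x \<in> e} \<subseteq> (\<lambda>(x,e). ZX x e) ` (V \<times> E)" using sub by auto
  moreover have "finite (V \<times> E)" using fV fE by simp
  ultimately show ?thesis unfolding G'_V_def using fV fE by (meson finite_Un finite_imageI finite_subset)
qed

lemma tau_le:
  assumes "finite V" "vertex_cover V E C"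
  shows "tau V E \<le> card C"
proof -
  have "{card C | C. vertex_cover V E C} \<subseteq> card ` Pow V" unfolding vertex_cover_def by auto
  then have "finite {card C | C. vertex_cover V E C}" using assms(1) by (meson finite_Pow_iff finite_imageI finite_subset)
  then show ?thesis unfolding tau_def using assms(2) by (intro Min_le) auto
qed

lemma sum_ind: "finite E \<Longrightarrow> U \<subseteq> E \<Longrightarrow> (\<Sum>e\<in>E. (if e \<in> U then 1 else 0::nat)) = card U"
  by (simp add: sum.If_cases Int_absorb1)



definition Gad :: "'a set \<Rightarrow> 'a gvert set" where
  "Gad e = insert (WE e) ((\<lambda>x. WX x e) ` e \<union> (\<lambda>x. ZX x e) ` e)"

lemma lower:
  assumes cub: "cubic_graph V E" and vc: "vc_set (G'_V V E) (G'_E V E) G'_r S"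
  shows "tau V E + card E \<le> card S"
proof -
  have sg: "simple_graph V E" using cub unfolding cubic_graph_def by simp
  have fV: "finite V" and fE: "finite E" using sg finite_E unfolding simple_graph_def by auto
  have eV: "\<And>e. e \<in> E \<Longrightarrow> e \<subseteq> V" and c2: "\<And>e. e \<in> E \<Longrightarrow> card e = 2"
    using sg unfolding simple_graph_def by auto
  have fe: "\<And>e. e \<in> E \<Longrightarrow> finite e" using c2 by (metis card.infinite zero_neq_numeral)
  have SG: "S \<subseteq> G'_V V E" using vc unfolding vc_set_def by simp
  have fS: "finite S" using finite_G'V[OF sg] SG finite_subset by blast
  define T where "T = {x\<in>V. Orig x \<in> S}"
  define U where "U = {e\<in>E. \<forall>x\<in>e. Orig x \<notin> S}"
  have fG: "\<And>e. e \<in> E \<Longrightarrow> finite (S \<inter> Gad e)" using fS by simp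
  have one: "\<And>e. e \<in> E \<Longrightarrow> 1 \<le> card (S \<inter> Gad e)"
  proof -
    fix e assume eE: "e \<in> E"
    from L1[OF vc eE c2[OF eE]] have "S \<inter> Gad e \<noteq> {}" unfolding Gad_def by auto
    then show "1 \<le> card (S \<inter> Gad e)" using fG[OF eE] by (simp add: Suc_le_eq card_gt_0_iff)
  qed
  have two: "\<And>e. e \<in> U \<Longrightarrow> 2 \<le> card (S \<inter> Gad e)"
  proof -
    fix e assume eU: "e \<in> U"
    then have eE: "e \<in> E" unfolding U_def by simp
    obtain a b where ab: "e = {a,b}" "a \<noteq> b" using c2[OF eE] by (meson card_2_iff)
    have pick: "\<And>y. y \<in> e \<Longrightarrow> WX y e \<in> S \<or> ZX y e \<in> S"
    proof -
      fix y assume ye: "y \<in> e"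
      have "Orig y \<notin> S" using eU ye unfolding U_def by auto
      then show "WX y e \<in> S \<or> ZX y e \<in> S" using L2[OF vc cub eE ye] by blast
    qed
    obtain ga where ga: "ga \<in> S \<inter> Gad e" "ga = WX a e \<or> ga = ZX a e"
      using pick[of a] ab unfolding Gad_def by auto
    obtain gb where gb: "gb \<in> S \<inter> Gad e" "gb = WX b e \<or> gb = ZX b e"
      using pick[of b] ab unfolding Gad_def by auto
    have "ga \<noteq> gb" using ga(2) gb(2) ab(2) by auto
    then have "card {ga, gb} = 2" by simp
    moreover have "{ga, gb} \<subseteq> S \<inter> Gad e" using ga gb by simp
    ultimately show "2 \<le> card (S \<inter> Gad e)" using card_mono[OF fG[OF eE]] by metis
  qed
  have UE: "U \<subseteq> E" unfolding U_def by auto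
  have "(\<Sum>e\<in>E. 1 + (if e \<in> U then 1 else 0::nat)) \<le> (\<Sum>e\<in>E. card (S \<inter> Gad e))"
  proof (rule sum_mono)
    fix e assume "e \<in> E" then show "1 + (if e \<in> U then 1 else 0::nat) \<le> card (S \<inter> Gad e)"
      using one two by (cases "e \<in> U") (auto simp del: One_nat_def)
  qed
  moreover have "(\<Sum>e\<in>E. 1 + (if e \<in> U then 1 else 0::nat)) = card E + card U"
  proof -
    have "(\<Sum>e\<in>E. 1 + (if e \<in> U then 1 else 0::nat)) = (\<Sum>e\<in>E. 1) + (\<Sum>e\<in>E. (if e \<in> U then 1 else 0::nat))"
      by (rule sum.distrib)
    then show ?thesis using sum_ind[OF fE UE] by simp
  qed
  ultimately have sumge: "card E + card U \<le> (\<Sum>e\<in>E. card (S \<inter> Gad e))" by simp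
  have disj: "\<forall>e\<in>E. \<forall>f\<in>E. e \<noteq> f \<longrightarrow> (S \<inter> Gad e) \<inter> (S \<inter> Gad f) = {}"
    unfolding Gad_def by auto
  have cU: "card (\<Union>e\<in>E. S \<inter> Gad e) = (\<Sum>e\<in>E. card (S \<inter> Gad e))"
    by (rule card_UN_disjoint[OF fE]) (use fG disj in auto)
  have d2: "Orig ` T \<inter> (\<Union>e\<in>E. S \<inter> Gad e) = {}" unfolding Gad_def by auto
  have fT: "finite T" unfolding T_def using fV by simp
  have "card (Orig ` T \<union> (\<Union>e\<in>E. S \<inter> Gad e)) = card (Orig ` T) + card (\<Union>e\<in>E. S \<inter> Gad e)"
    by (rule card_Un_disjoint) (use fT fE fG d2 fS in auto)
  moreover have "card (Orig ` T) = card T" by (simp add: card_image inj_on_def)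
  moreover have "Orig ` T \<union> (\<Union>e\<in>E. S \<inter> Gad e) \<subseteq> S" unfolding T_def by auto
  ultimately have cS: "card T + (\<Sum>e\<in>E. card (S \<inter> Gad e)) \<le> card S"
    using cU card_mono[OF fS] by metis
  define C where "C = T \<union> (\<lambda>e. SOME x. x \<in> e) ` U"
  have cov: "vertex_cover V E C"
    unfolding vertex_cover_def
  proof (intro conjI ballI)
    show "C \<subseteq> V"
    proof
      fix x assume "x \<in> C"
      then consider "x \<in> T" | e where "e \<in> U" "x = (SOME x. x \<in> e)" unfolding C_def by blast
      then show "x \<in> V"
      proof cases
        case 1 then show ?thesis unfolding T_def by simp
      next
        case 2
        then have "e \<in> E" using UE by auto
        moreover have "e \<noteq> {}" using c2[OF \<open>e \<in> E\<close>] by auto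
        ultimately have "x \<in> e" using 2 by (simp add: some_in_eq)
        then show ?thesis using eV \<open>e \<in> E\<close> by blast
      qed
    qed
  next
    fix e assume eE: "e \<in> E"
    show "e \<inter> C \<noteq> {}"
    proof (cases "e \<in> U")
      case True
      have "e \<noteq> {}" using c2[OF eE] by auto
      then have "(SOME x. x \<in> e) \<in> e" by (simp add: some_in_eq)
      moreover have "(SOME x. x \<in> e) \<in> C" unfolding C_def using True by blast
      ultimately show ?thesis by blast
    next
      case False
      then obtain x where "x \<in> e" "Orig x \<in> S" using eE unfolding U_def by auto
      then have "x \<in> T" using eV[OF eE] unfolding T_def by auto
      then show ?thesis using \<open>x \<in> e\<close> unfolding C_def by blast
    qed
  qed
  have "card C \<le> card T + card ((\<lambda>e. SOME x. x \<in> e) ` U)" unfolding C_def by (rule card_Un_le)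
  also have "\<dots> \<le> card T + card U" using card_image_le[of U] finite_subset[OF UE fE] by simp
  finally have "tau V E \<le> card T + card U" using tau_le[OF fV cov] by simp
  then show ?thesis using sumge cS by simp
qed



lemma E_OW[simp]: "e \<in> E \<Longrightarrow> x \<in> e \<Longrightarrow> {Orig x, WX x e} \<in> G'_E V E"
  unfolding G'_E_def by (rule UnI1, rule UnI1, rule UnI1, rule UnI1) blast
lemma E_WO[simp]: "e \<in> E \<Longrightarrow> x \<in> e \<Longrightarrow> {WX x e, Orig x} \<in> G'_E V E"
  using E_OW by (metis insert_commute)
lemma E_WW[simp]: "e \<in> E \<Longrightarrow> x \<in> e \<Longrightarrow> {WX x e, WE e} \<in> G'_E V E"
  unfolding G'_E_def by (rule UnI1, rule UnI1, rule UnI1, rule UnI2) blast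
lemma E_WW'[simp]: "e \<in> E \<Longrightarrow> x \<in> e \<Longrightarrow> {WE e, WX x e} \<in> G'_E V E"
  using E_WW by (metis insert_commute)
lemma E_WZ[simp]: "e \<in> E \<Longrightarrow> x \<in> e \<Longrightarrow> {WX x e, ZX x e} \<in> G'_E V E"
  unfolding G'_E_def by (rule UnI1, rule UnI1, rule UnI2) blast
lemma E_ZW[simp]: "e \<in> E \<Longrightarrow> x \<in> e \<Longrightarrow> {ZX x e, WX x e} \<in> G'_E V E"
  using E_WZ by (metis insert_commute)
lemma E_ZE[simp]: "e \<in> E \<Longrightarrow> x \<in> e \<Longrightarrow> {ZX x e, WE e} \<in> G'_E V E"
  unfolding G'_E_def by (rule UnI1, rule UnI2) blast
lemma E_EZ[simp]: "e \<in> E \<Longrightarrow> x \<in> e \<Longrightarrow> {WE e, ZX x e} \<in> G'_E V E"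
  using E_ZE by (metis insert_commute)
lemma E_XX[simp]: "e \<in> E \<Longrightarrow> f \<in> E \<Longrightarrow> x \<in> e \<Longrightarrow> x \<in> f \<Longrightarrow> e \<noteq> f \<Longrightarrow> {WX x e, WX x f} \<in> G'_E V E"
  unfolding G'_E_def by (rule UnI2) blast

lemma V_O[simp]: "x \<in> V \<Longrightarrow> Orig x \<in> G'_V V E" unfolding G'_V_def by blast
lemma V_WX[simp]: "e \<in> E \<Longrightarrow> x \<in> e \<Longrightarrow> WX x e \<in> G'_V V E" unfolding G'_V_def by blast
lemma V_WE[simp]: "e \<in> E \<Longrightarrow> WE e \<in> G'_V V E" unfolding G'_V_def by blast
lemma V_ZX[simp]: "e \<in> E \<Longrightarrow> x \<in> e \<Longrightarrow> ZX x e \<in> G'_V V E" unfolding G'_V_def by blast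

lemma k_linked_0: "k_linked VH EH v S 0"
  unfolding k_linked_def is_fan_def by (rule exI[of _ "{}"]) simp

lemma three_edges:
  assumes "cubic_graph V E" "e \<in> E" "x \<in> e"
  shows "\<exists>f g. f \<in> E \<and> g \<in> E \<and> x \<in> f \<and> x \<in> g \<and> e \<noteq> f \<and> e \<noteq> g \<and> f \<noteq> g"
proof -
  have "x \<in> V" using assms unfolding cubic_graph_def simple_graph_def by auto
  then have "card {h\<in>E. x \<in> h} = 3" using assms unfolding cubic_graph_def degree_def by auto
  then obtain a b c where abc: "{h\<in>E. x \<in> h} = {a,b,c}" "a \<noteq> b" "b \<noteq> c" "a \<noteq> c"
    by (meson card_3_iff)
  have "e \<in> {a,b,c}" "a \<in> {h\<in>E. x \<in> h}" "b \<in> {h\<in>E. x \<in> h}" "c \<in> {h\<in>E. x \<in> h}"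
    using abc(1) assms by auto
  then show ?thesis using abc(2-4) by auto
qed

lemma other_end:
  assumes "simple_graph V E" "e \<in> E" "x \<in> e"
  shows "\<exists>y. e = {x,y} \<and> x \<noteq> y"
proof -
  have "card e = 2" using assms unfolding simple_graph_def by auto
  then obtain a b where "e = {a,b}" "a \<noteq> b" by (meson card_2_iff)
  then show ?thesis using assms(3) by auto
qed



definition S0 :: "'a set set \<Rightarrow> 'a set \<Rightarrow> 'a gvert set" where
  "S0 E C = Orig ` C \<union> {ZX x e | x e. e \<in> E \<and> x \<in> e \<and> x \<notin> C} \<union> WE ` {e\<in>E. e \<subseteq> C}"

definition side :: "'a set \<Rightarrow> 'a set \<Rightarrow> 'a \<Rightarrow> 'a gvert list" where
  "side C h w = (if w \<in> C then [WE h] else [WE h, ZX w h])"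

lemma fan_WE:
  assumes cub: "cubic_graph V E" and cov: "vertex_cover V E C" and eE: "e \<in> E"
    and nS: "WE e \<notin> S0 E C"
  shows "k_linked (G'_V V E) (G'_E V E) (WE e) (S0 E C) 3"
proof -
  have sg: "simple_graph V E" using cub unfolding cubic_graph_def by simp
  have "\<not> e \<subseteq> C" using nS eE unfolding S0_def by auto
  then obtain a where a: "a \<in> e" "a \<notin> C" by auto
  obtain b where b: "e = {a,b}" "a \<noteq> b" using other_end[OF sg eE a(1)] by auto
  have "e \<inter> C \<noteq> {}" using cov eE unfolding vertex_cover_def by auto
  then have bC: "b \<in> C" using a b by auto
  have bV: "b \<in> V" using sg eE b unfolding simple_graph_def by auto
  obtain f where f: "f \<in> E" "a \<in> f" "e \<noteq> f" using three_edges[OF cub eE a(1)] by auto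
  let ?ts = "[[ZX a e], [WX a e, WX a f, ZX a f], [WX b e, Orig b]]"
  have "k_linked (G'_V V E) (G'_E V E) (WE e) (S0 E C) (length ?ts)"
  proof (rule fan_from_tails[OF nS])
    show "\<forall>t\<in>set ?ts. t \<noteq> [] \<and> walk (G'_V V E) (G'_E V E) (WE e # t) \<and> last t \<in> S0 E C"
      using eE f a b bC bV unfolding S0_def by auto
    show "distinct (WE e # concat ?ts)" using f b by auto
  qed
  then show ?thesis by (simp add: numeral_eq_Suc)
qed

lemma side_props:
  assumes "h \<in> E" "x \<in> C" "h = {x,w}" "x \<noteq> w"
  shows "side C h w \<noteq> [] \<and> walk (G'_V V E) (G'_E V E) (WX x h # side C h w)
         \<and> last (side C h w) \<in> S0 E C \<and> set (side C h w) \<subseteq> {WE h, ZX w h} \<and> distinct (side C h w)"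
  using assms unfolding side_def S0_def by auto

lemma fan_WX:
  assumes cub: "cubic_graph V E" and cov: "vertex_cover V E C" and eE: "e \<in> E" and xe: "x \<in> e"
  shows "k_linked (G'_V V E) (G'_E V E) (WX x e) (S0 E C) 4"
proof -
  have sg: "simple_graph V E" using cub unfolding cubic_graph_def by simp
  have nS: "WX x e \<notin> S0 E C" unfolding S0_def by auto
  obtain y where y: "e = {x,y}" "x \<noteq> y" using other_end[OF sg eE xe] by auto
  obtain f g where fg: "f \<in> E" "g \<in> E" "x \<in> f" "x \<in> g" "e \<noteq> f" "e \<noteq> g" "f \<noteq> g"
    using three_edges[OF cub eE xe] by blast
  have xV: "x \<in> V" "y \<in> V" using sg eE y unfolding simple_graph_def by auto
  show ?thesis
  proof (cases "x \<in> C")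
    case False
    have "e \<inter> C \<noteq> {}" using cov eE unfolding vertex_cover_def by auto
    then have yC: "y \<in> C" using False y by auto
    let ?ts = "[[ZX x e], [WE e, WX y e, Orig y], [WX x f, ZX x f], [WX x g, ZX x g]]"
    have "k_linked (G'_V V E) (G'_E V E) (WX x e) (S0 E C) (length ?ts)"
    proof (rule fan_from_tails[OF nS])
      show "\<forall>t\<in>set ?ts. t \<noteq> [] \<and> walk (G'_V V E) (G'_E V E) (WX x e # t) \<and> last t \<in> S0 E C"
        using eE fg y xV yC False unfolding S0_def by auto
      show "distinct (WX x e # concat ?ts)" using fg y by auto
    qed
    then show ?thesis by (simp add: numeral_eq_Suc)
  next
    case True
    obtain u where u: "f = {x,u}" "x \<noteq> u" using other_end[OF sg fg(1) fg(3)] by auto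
    obtain u' where u': "g = {x,u'}" "x \<noteq> u'" using other_end[OF sg fg(2) fg(4)] by auto
    note se = side_props[OF eE True y]
    note sf = side_props[OF fg(1) True u]
    note sg' = side_props[OF fg(2) True u']
    let ?ts = "[[Orig x], side C e y, WX x f # side C f u, WX x g # side C g u']"
    have "k_linked (G'_V V E) (G'_E V E) (WX x e) (S0 E C) (length ?ts)"
    proof (rule fan_from_tails[OF nS])
      have w1: "walk (G'_V V E) (G'_E V E) (WX x e # [Orig x])" using eE xe xV by simp
      have w3: "walk (G'_V V E) (G'_E V E) (WX x e # WX x f # side C f u)"
        using sf eE fg xe by simp
      have w4: "walk (G'_V V E) (G'_E V E) (WX x e # WX x g # side C g u')"
        using sg' eE fg xe by simp
      have l3: "last (WX x f # side C f u) \<in> S0 E C" "last (WX x g # side C g u') \<in> S0 E C"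
        using sf sg' by auto
      have l1: "Orig x \<in> S0 E C" using True unfolding S0_def by auto
      show "\<forall>t\<in>set ?ts. t \<noteq> [] \<and> walk (G'_V V E) (G'_E V E) (WX x e # t) \<and> last t \<in> S0 E C"
        using w1 w3 w4 l1 l3 se by auto
      have "set (side C e y) \<subseteq> {WE e, ZX y e}" "set (side C f u) \<subseteq> {WE f, ZX u f}"
        "set (side C g u') \<subseteq> {WE g, ZX u' g}"
        "distinct (side C e y)" "distinct (side C f u)" "distinct (side C g u')"
        using se sf sg' by auto
      then show "distinct (WX x e # concat ?ts)" using fg by auto
    qed
    then show ?thesis by (simp add: numeral_eq_Suc)
  qed
qed



lemma S0_vc:
  assumes cub: "cubic_graph V E" and cov: "vertex_cover V E C"
  shows "vc_set (G'_V V E) (G'_E V E) G'_r (S0 E C)"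
  unfolding vc_set_def
proof (intro conjI ballI)
  show "S0 E C \<subseteq> G'_V V E"
    using cov unfolding S0_def vertex_cover_def by auto
next
  fix v assume v: "v \<in> G'_V V E - S0 E C"
  then have vG: "v \<in> G'_V V E" and nS: "v \<notin> S0 E C" by auto
  show "k_linked (G'_V V E) (G'_E V E) v (S0 E C) (G'_r v)"
  proof (cases v)
    case (Orig x) then show ?thesis by (simp add: k_linked_0)
  next
    case (ZX x e) then show ?thesis by (simp add: k_linked_0)
  next
    case (WE e)
    then have "e \<in> E" using vG unfolding G'_V_def by auto
    then show ?thesis using fan_WE[OF cub cov _ ] nS WE by simp
  next
    case (WX x e)
    then have "e \<in> E" "x \<in> e" using vG unfolding G'_V_def by auto
    then show ?thesis using fan_WX[OF cub cov] WX by simp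
  qed
qed

lemma S0_card:
  assumes cub: "cubic_graph V E" and cov: "vertex_cover V E C"
  shows "card (S0 E C) \<le> card C + card E"
proof -
  have sg: "simple_graph V E" using cub unfolding cubic_graph_def by simp
  have fV: "finite V" and fE: "finite E" using sg finite_E unfolding simple_graph_def by auto
  have fC: "finite C" using cov fV unfolding vertex_cover_def by (meson finite_subset)
  define Z where "Z = {ZX x e | x e. e \<in> E \<and> x \<in> e \<and> x \<notin> C}"
  define W where "W = WE ` {e\<in>E. e \<subseteq> C}"
  define N where "N = {e\<in>E. \<not> e \<subseteq> C}"
  define h where "h e = ZX (SOME x. x \<in> e \<and> x \<notin> C) e" for e
  have "Z \<subseteq> h ` N"
  proof
    fix z assume "z \<in> Z"
    then obtain x e where xe: "z = ZX x e" "e \<in> E" "x \<in> e" "x \<notin> C" unfolding Z_def by blast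
    obtain y where y: "e = {x,y}" "x \<noteq> y" using other_end[OF sg xe(2,3)] by auto
    have "e \<inter> C \<noteq> {}" using cov xe unfolding vertex_cover_def by auto
    then have "y \<in> C" using y xe by auto
    then have "(SOME x'. x' \<in> e \<and> x' \<notin> C) = x"
      using xe y by (intro some_equality) auto
    then have "z = h e" unfolding h_def using xe by simp
    moreover have "e \<in> N" unfolding N_def using xe by auto
    ultimately show "z \<in> h ` N" by blast
  qed
  moreover have fN: "finite N" unfolding N_def using fE by simp
  ultimately have "card Z \<le> card (h ` N)" by (intro card_mono) auto
  also have "\<dots> \<le> card N" using fN by (rule card_image_le)
  finally have cZ: "card Z \<le> card N" .
  have cW: "card W \<le> card {e\<in>E. e \<subseteq> C}" unfolding W_def by (rule card_image_le) (use fE in simp)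
  have "card N + card {e\<in>E. e \<subseteq> C} = card E"
  proof -
    have "N \<union> {e\<in>E. e \<subseteq> C} = E" "N \<inter> {e\<in>E. e \<subseteq> C} = {}" unfolding N_def by auto
    moreover have "finite N" "finite {e\<in>E. e \<subseteq> C}" unfolding N_def using fE by auto
    ultimately show ?thesis using card_Un_disjoint[of N "{e\<in>E. e \<subseteq> C}"] by simp
  qed
  have "card (S0 E C) \<le> card (Orig ` C \<union> Z) + card W" unfolding S0_def Z_def W_def by (rule card_Un_le)
  also have "\<dots> \<le> card (Orig ` C) + card Z + card W" using card_Un_le[of "Orig ` C" Z] by simp
  also have "\<dots> \<le> card C + card Z + card W" using card_image_le[OF fC, of Orig] by simp
  finally show ?thesis using cZ cW \<open>card N + card {e\<in>E. e \<subseteq> C} = card E\<close> by simp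
qed

theorem lemma3:
  fixes V :: "'a set" and E :: "'a set set"
  assumes "cubic_graph V E"
  shows "kappa (G'_V V E) (G'_E V E) G'_r = tau V E + card E"
proof -
  have sg: "simple_graph V E" using assms unfolding cubic_graph_def by simp
  have fV: "finite V" using sg unfolding simple_graph_def by auto
  have "\<forall>e\<in>E. e \<inter> V \<noteq> {}"
  proof
    fix e assume "e \<in> E"
    then have "e \<subseteq> V" "card e = 2" using sg unfolding simple_graph_def by auto
    then show "e \<inter> V \<noteq> {}" by (auto simp: Int_absorb2)
  qed
  then have "vertex_cover V E V" unfolding vertex_cover_def by auto
  then have ne: "{card C | C. vertex_cover V E C} \<noteq> {}" by auto
  have "{card C | C. vertex_cover V E C} \<subseteq> card ` Pow V" unfolding vertex_cover_def by auto
  then have "finite {card C | C. vertex_cover V E C}" using fV by (meson finite_Pow_iff finite_imageI finite_subset)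
  from Min_in[OF this ne] obtain C where C: "vertex_cover V E C" "card C = tau V E"
    unfolding tau_def by auto
  have K: "{card S | S. vc_set (G'_V V E) (G'_E V E) G'_r S} \<subseteq> card ` Pow (G'_V V E)"
    unfolding vc_set_def by auto
  have fK: "finite {card S | S. vc_set (G'_V V E) (G'_E V E) G'_r S}"
    by (rule finite_subset[OF K]) (use finite_G'V[OF sg] in simp)
  have vc0: "vc_set (G'_V V E) (G'_E V E) G'_r (S0 E C)" by (rule S0_vc[OF assms C(1)])
  have "kappa (G'_V V E) (G'_E V E) G'_r \<le> card (S0 E C)"
    unfolding kappa_def using fK vc0 by (intro Min_le) auto
  also have "\<dots> \<le> tau V E + card E" using S0_card[OF assms C(1)] C(2) by simp
  finally have up: "kappa (G'_V V E) (G'_E V E) G'_r \<le> tau V E + card E" .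
  have neK: "{card S | S. vc_set (G'_V V E) (G'_E V E) G'_r S} \<noteq> {}" using vc0 by auto
  from Min_in[OF fK neK] obtain S where S: "vc_set (G'_V V E) (G'_E V E) G'_r S"
    "card S = kappa (G'_V V E) (G'_E V E) G'_r" unfolding kappa_def by auto
  have "tau V E + card E \<le> kappa (G'_V V E) (G'_E V E) G'_r" using lower[OF assms S(1)] S(2) by simp
  then show ?thesis using up by simp
qed

end
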